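(* For all $n\ge 1$, $\left|\mathrm{Av}_n[\overline{14}32]\right|=C_{n-1}$, where $C_m=\frac{1}{m+1}\binom{2m}{m}$ is the $m$th Catalan number.
   Context: For $\sigma\in S_n$, the cyclic permutation $[\sigma]$ is the set of all rotations of $\sigma$; $[S_n]$ is the set of cyclic permutations of length $n$. $[\sigma]$ contains the vincular pattern $[\overline{14}32]$ if some rotation of $\sigma$ has entries $a,b,c,d$ appearing in this order with $a,b$ adjacent and $a<d<c<b$; $\mathrm{Av}_n[\overline{14}32]$ is the set of $[\sigma]\in[S_n]$ not containing it. *)

theory Defs
  imports Complex_Main
begin

definition perms :: "nat \<Rightarrow> nat list set" where
  "perms n = {xs. distinct xs \<and> set xs = {1..n}}"

text \<open>The cyclic permutation [sigma]: the set of all rotations of sigma.\<close>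
definition cyc :: "nat list \<Rightarrow> nat list set" where
  "cyc xs = {rotate k xs | k. k < length xs}"

definition cyc_perms :: "nat \<Rightarrow> nat list set set" where
  "cyc_perms n = cyc ` perms n"

text \<open>A linear word contains the vincular pattern 14-32 (1 and 4 adjacent):
  entries a,b,c,d at positions i, i+1 < j < k with a < d < c < b.\<close>
definition contains_1432 :: "nat list \<Rightarrow> bool" where
  "contains_1432 xs \<longleftrightarrow> (\<exists>i j k. i + 1 < j \<and> j < k \<and> k < length xs \<and>
      xs ! i < xs ! k \<and> xs ! k < xs ! j \<and> xs ! j < xs ! (i + 1))"

definition cyc_contains_1432 :: "nat list set \<Rightarrow> bool" where
  "cyc_contains_1432 C \<longleftrightarrow> (\<exists>xs\<in>C. contains_1432 xs)"

definition Av_1432 :: "nat \<Rightarrow> nat list set set" where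
  "Av_1432 n = {C \<in> cyc_perms n. \<not> cyc_contains_1432 C}"

definition catalan :: "nat \<Rightarrow> real" where
  "catalan m = 1 / (real m + 1) * real ((2 * m) choose m)"

end

theory Submission
  imports Defs
begin


fun ord :: "'a list \<Rightarrow> 'a \<Rightarrow> 'a \<Rightarrow> bool" where
  "ord [] a b = False"
| "ord (x#xs) a b = ((a = x \<and> b \<in> set xs) \<or> ord xs a b)"

lemma ord_set: "ord xs a b \<Longrightarrow> a \<in> set xs \<and> b \<in> set xs"
  by (induct xs) auto

lemma ord_asym: "distinct xs \<Longrightarrow> ord xs a b \<Longrightarrow> \<not> ord xs b a"
  by (induct xs) (auto dest: ord_set)

lemma ord_irrefl: "distinct xs \<Longrightarrow> \<not> ord xs a a"
  by (induct xs) (auto dest: ord_set)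

lemma ord_total: "a \<in> set xs \<Longrightarrow> b \<in> set xs \<Longrightarrow> a \<noteq> b \<Longrightarrow> ord xs a b \<or> ord xs b a"
  by (induct xs) auto

lemma ord_trans: "distinct xs \<Longrightarrow> ord xs a b \<Longrightarrow> ord xs b c \<Longrightarrow> ord xs a c"
  by (induct xs) (auto dest: ord_set)

lemma ord_append: "ord (xs @ ys) a b \<longleftrightarrow> ord xs a b \<or> ord ys a b \<or> (a \<in> set xs \<and> b \<in> set ys)"
  by (induct xs) auto

lemma ord_removeAll: "ord (removeAll e xs) a b \<longleftrightarrow> a \<noteq> e \<and> b \<noteq> e \<and> ord xs a b"
  by (induct xs) auto

lemma ord_nth: "distinct xs \<Longrightarrow> i < length xs \<Longrightarrow> j < length xs \<Longrightarrow> ord xs (xs!i) (xs!j) \<longleftrightarrow> i < j"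
proof (induct xs arbitrary: i j)
  case Nil then show ?case by simp
next
  case (Cons x xs)
  then show ?case
    by (cases i; cases j) (auto simp: nth_eq_iff_index_eq dest: ord_set)
qed

definition cb :: "'a list \<Rightarrow> 'a \<Rightarrow> 'a \<Rightarrow> 'a \<Rightarrow> bool" where
  "cb xs a b c \<longleftrightarrow> (ord xs a b \<and> ord xs b c) \<or> (ord xs b c \<and> ord xs c a) \<or> (ord xs c a \<and> ord xs a b)"

lemma cb_cycle: "cb xs a b c \<Longrightarrow> cb xs b c a"
  unfolding cb_def by blast

lemma cb_set: "cb xs a b c \<Longrightarrow> a \<in> set xs \<and> b \<in> set xs \<and> c \<in> set xs"
  unfolding cb_def by (auto dest: ord_set)

lemma cb_asym: "distinct xs \<Longrightarrow> cb xs a b c \<Longrightarrow> \<not> cb xs a c b"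
  unfolding cb_def by (meson ord_asym ord_trans)

lemma cb_distinct: "distinct xs \<Longrightarrow> cb xs a b c \<Longrightarrow> a \<noteq> b \<and> b \<noteq> c \<and> a \<noteq> c"
  unfolding cb_def by (meson ord_asym ord_trans)

lemma cb_total: "a \<in> set xs \<Longrightarrow> b \<in> set xs \<Longrightarrow> c \<in> set xs \<Longrightarrow> a \<noteq> b \<Longrightarrow> b \<noteq> c \<Longrightarrow> a \<noteq> c
  \<Longrightarrow> cb xs a b c \<or> cb xs a c b"
  unfolding cb_def by (meson ord_total)

lemma cb_trans: "distinct xs \<Longrightarrow> cb xs v w x \<Longrightarrow> cb xs v x y \<Longrightarrow> cb xs w x y"
  unfolding cb_def by (meson ord_asym ord_trans ord_total ord_set)

lemma cb_rotate1: "distinct xs \<Longrightarrow> cb (rotate1 xs) a b c \<longleftrightarrow> cb xs a b c"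
  by (cases xs) (auto simp: cb_def ord_append dest: ord_set)

lemma cb_rotate: "distinct xs \<Longrightarrow> cb (rotate k xs) a b c \<longleftrightarrow> cb xs a b c"
  by (induct k) (auto simp: cb_rotate1)


fun ins :: "'a list \<Rightarrow> 'a \<Rightarrow> 'a \<Rightarrow> 'a list" where
  "ins [] u e = []"
| "ins (x#xs) u e = (if x = u then x # e # xs else x # ins xs u e)"

lemma set_ins: "u \<in> set xs \<Longrightarrow> set (ins xs u e) = insert e (set xs)"
  by (induct xs) auto

lemma distinct_ins: "distinct xs \<Longrightarrow> e \<notin> set xs \<Longrightarrow> u \<in> set xs \<Longrightarrow> distinct (ins xs u e)"
  by (induct xs) (auto simp: set_ins)

lemma removeAll_ins: "e \<notin> set xs \<Longrightarrow> removeAll e (ins xs u e) = xs"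
  by (induct xs) auto

lemma hd_ins: "xs \<noteq> [] \<Longrightarrow> hd (ins xs u e) = hd xs"
  by (cases xs) auto

lemma ins_append: "u \<notin> set p \<Longrightarrow> ins (p @ xs) u e = p @ ins xs u e"
  by (induct p) auto

lemma ord_ins_old: "a \<noteq> e \<Longrightarrow> b \<noteq> e \<Longrightarrow> e \<notin> set xs \<Longrightarrow> ord (ins xs u e) a b \<longleftrightarrow> ord xs a b"
  by (metis ord_removeAll removeAll_ins)

lemma ord_ins_to: "distinct xs \<Longrightarrow> e \<notin> set xs \<Longrightarrow> u \<in> set xs \<Longrightarrow> x \<noteq> e \<Longrightarrow>
   ord (ins xs u e) x e \<longleftrightarrow> x = u \<or> ord xs x u"
  by (induct xs) (auto simp: set_ins dest: ord_set)

lemma ord_ins_from: "distinct xs \<Longrightarrow> e \<notin> set xs \<Longrightarrow> u \<in> set xs \<Longrightarrow>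
   ord (ins xs u e) e y \<longleftrightarrow> y \<noteq> e \<and> ord xs u y"
  by (induct xs) (auto simp: set_ins dest: ord_set)

lemma cb_ins_old: "a \<noteq> e \<Longrightarrow> b \<noteq> e \<Longrightarrow> c \<noteq> e \<Longrightarrow> e \<notin> set xs \<Longrightarrow> cb (ins xs u e) a b c \<longleftrightarrow> cb xs a b c"
  unfolding cb_def by (simp add: ord_ins_old)

lemma cb_ins_e: "distinct xs \<Longrightarrow> e \<notin> set xs \<Longrightarrow> u \<in> set xs \<Longrightarrow> v \<in> set xs \<Longrightarrow> x \<in> set xs \<Longrightarrow> v \<noteq> x \<Longrightarrow>
   cb (ins xs u e) v x e \<longleftrightarrow> v \<noteq> u \<and> (x = u \<or> cb xs v x u)"
proof -
  assume a: "distinct xs" "e \<notin> set xs" "u \<in> set xs" "v \<in> set xs" "x \<in> set xs" "v \<noteq> x"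
  then have ne: "v \<noteq> e" "x \<noteq> e" by auto
  have "cb (ins xs u e) v x e \<longleftrightarrow> (ord xs v x \<and> (x = u \<or> ord xs x u)) \<or> ((x = u \<or> ord xs x u) \<and> ord xs u v)
     \<or> (ord xs u v \<and> ord xs v x)"
    unfolding cb_def using a ne by (simp add: ord_ins_old ord_ins_to ord_ins_from)
  also have "\<dots> \<longleftrightarrow> v \<noteq> u \<and> (x = u \<or> cb xs v x u)"
    unfolding cb_def using a by (metis ord_asym ord_irrefl ord_total)
  finally show ?thesis .
qed

definition cadj :: "nat list \<Rightarrow> nat \<Rightarrow> nat \<Rightarrow> bool" where
  "cadj xs a b \<longleftrightarrow> a \<in> set xs \<and> b \<in> set xs \<and> a \<noteq> b \<and> (\<forall>z\<in>set xs. \<not> cb xs a z b)"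

definition av :: "nat list \<Rightarrow> bool" where
  "av xs \<longleftrightarrow> (\<forall>a b c d. cadj xs a b \<longrightarrow> a < b \<longrightarrow> cb xs a c d \<longrightarrow> a < d \<longrightarrow> d < c \<longrightarrow> c < b \<longrightarrow> False)"

definition act :: "nat list \<Rightarrow> nat \<Rightarrow> bool" where
  "act xs v \<longleftrightarrow> (\<forall>x\<in>set xs. \<forall>y\<in>set xs. v < x \<longrightarrow> x < y \<longrightarrow> cb xs v x y)"

lemma act_up: "distinct xs \<Longrightarrow> act xs v \<Longrightarrow> v \<le> w \<Longrightarrow> w \<in> set xs \<Longrightarrow> act xs w"
  unfolding act_def
  by (metis cb_trans le_less less_trans)


locale insctx =
  fixes r :: "nat list" and u e :: nat
  assumes dr: "distinct r" and en: "e \<notin> set r" and ur: "u \<in> set r" and lt: "\<forall>x\<in>set r. x < e"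
begin

abbreviation "s \<equiv> ins r u e"

lemma ds: "distinct s" by (rule distinct_ins[OF dr en ur])
lemma ss: "set s = insert e (set r)" by (rule set_ins[OF ur])

lemma cadj_ue: "cadj s u e"
  unfolding cadj_def
proof (intro conjI ballI)
  show "u \<in> set s" "e \<in> set s" using ss ur by auto
  show "u \<noteq> e" using en ur by auto
  fix z assume z: "z \<in> set s"
  show "\<not> cb s u z e"
  proof
    assume c: "cb s u z e"
    then have "z \<noteq> e" "z \<noteq> u" using cb_distinct[OF ds c] by auto
    then have "z \<in> set r" using z ss by auto
    with c cb_ins_e[OF dr en ur ur, of z] \<open>z \<noteq> u\<close> show False by auto
  qed
qed

lemma cadj_to_e: "cadj s a e \<Longrightarrow> a = u"
proof (rule ccontr)
  assume c: "cadj s a e" and "a \<noteq> u"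
  then have "a \<in> set r" using ss unfolding cadj_def by auto
  then have "cb s a u e" using cb_ins_e[OF dr en ur \<open>a \<in> set r\<close> ur] \<open>a \<noteq> u\<close> by auto
  with c ur ss show False unfolding cadj_def by auto
qed

lemma cadj_old: "a \<noteq> e \<Longrightarrow> b \<noteq> e \<Longrightarrow> cadj s a b \<Longrightarrow> cadj r a b"
proof -
  assume ne: "a \<noteq> e" "b \<noteq> e" and c: "cadj s a b"
  then have ab: "a \<in> set r" "b \<in> set r" "a \<noteq> b" using ss unfolding cadj_def by auto
  show ?thesis unfolding cadj_def
  proof (intro conjI ballI)
    fix z assume z: "z \<in> set r"
    then have "z \<noteq> e" using en by auto
    then have "cb s a z b = cb r a z b" using cb_ins_old[OF ne(1) _ ne(2) en] by blast
    then show "\<not> cb r a z b" using c z ss unfolding cadj_def by auto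
  qed (use ab in auto)
qed

lemma cadj_keep: "a \<noteq> u \<Longrightarrow> cadj r a b \<Longrightarrow> cadj s a b"
proof -
  assume au: "a \<noteq> u" and c: "cadj r a b"
  then have ab: "a \<in> set r" "b \<in> set r" "a \<noteq> b" unfolding cadj_def by auto
  then have ne: "a \<noteq> e" "b \<noteq> e" using en by auto
  show ?thesis unfolding cadj_def
  proof (intro conjI ballI)
    show "a \<in> set s" "b \<in> set s" "a \<noteq> b" using ab ss by auto
    fix z assume z: "z \<in> set s"
    show "\<not> cb s a z b"
    proof
      assume cz: "cb s a z b"
      show False
      proof (cases "z = e")
        case True
        then have "cb s b a e" using cb_cycle[OF cb_cycle[OF cz]] by simp
        then have bau: "cb r b a u" using cb_ins_e[OF dr en ur ab(2) ab(1)] ab au by auto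
        have "cb r a u b" using cb_cycle[OF bau] .
        with c ur show False unfolding cadj_def by auto
      next
        case False
        then have "cb r a z b" using cz cb_ins_old[OF ne(1) False ne(2) en] by simp
        with c z ss False show False unfolding cadj_def by auto
      qed
    qed
  qed
qed

lemma av_ins: "av s \<longleftrightarrow> av r \<and> act r u"
proof
  assume as: "av s"
  show "av r \<and> act r u"
  proof
    show "av r" unfolding av_def
    proof (intro allI impI)
      fix a b c d assume h: "cadj r a b" "a < b" "cb r a c d" "a < d" "d < c" "c < b"
      have inr: "a \<in> set r" "c \<in> set r" "d \<in> set r" using cb_set[OF h(3)] by auto
      then have ne: "a \<noteq> e" "c \<noteq> e" "d \<noteq> e" using en by auto
      have cs: "cb s a c d" using h(3) cb_ins_old[OF ne en] by simp
      show False
      proof (cases "a = u")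
        case True
        have "u < e" using lt ur by auto
        have "c < e" using lt inr by auto
        show False using as[unfolded av_def, rule_format, of u e c d] cadj_ue cs True h \<open>u < e\<close> \<open>c < e\<close> by blast
      next
        case False
        with as cadj_keep[OF False h(1)] cs h show False unfolding av_def by blast
      qed
    qed
    show "act r u" unfolding act_def
    proof (intro ballI impI)
      fix x y assume xy: "x \<in> set r" "y \<in> set r" "u < x" "x < y"
      show "cb r u x y"
      proof (rule ccontr)
        assume "\<not> cb r u x y"
        then have "cb r u y x" using cb_total[OF ur xy(1) xy(2)] xy by auto
        then have "cb s u y x" using cb_ins_old[of u e y x r] en ur xy by auto
        moreover have "y < e" using lt xy by auto
        moreover have "u < e" using lt ur by auto
        ultimately show False using as[unfolded av_def, rule_format, of u e y x] cadj_ue xy by blast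
      qed
    qed
  qed
next
  assume h: "av r \<and> act r u"
  show "av s" unfolding av_def
  proof (intro allI impI)
    fix a b c d assume p: "cadj s a b" "a < b" "cb s a c d" "a < d" "d < c" "c < b"
    have cds: "c \<in> set s" "d \<in> set s" using cb_set[OF p(3)] by auto
    have bs: "b \<in> set s" using p(1) unfolding cadj_def by auto
    have bl: "b \<le> e" using bs ss lt by fastforce
    then have ne: "c \<noteq> e" "d \<noteq> e" using p by auto
    then have cdr: "c \<in> set r" "d \<in> set r" using cds ss by auto
    show False
    proof (cases "b = e")
      case True
      then have "a = u" using cadj_to_e p(1) by simp
      moreover have "u \<noteq> e" using en ur by auto
      ultimately have "cb r u c d" using p(3) cb_ins_old[OF _ ne en, of u u] by simp
      moreover have "cb r u d c" using h cdr p \<open>a = u\<close> unfolding act_def by auto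
      ultimately show False using cb_asym[OF dr] by blast
    next
      case False
      then have "a \<noteq> e" using p bl by auto
      then have "cadj r a b" "cb r a c d" using cadj_old[OF _ False p(1)] p(3) cb_ins_old[OF _ ne en] by auto
      with h p show False unfolding av_def by blast
    qed
  qed
qed

lemma act_ins: "w \<in> set r \<Longrightarrow> act s w \<longleftrightarrow> act r w \<and> (\<forall>x\<in>set r. w < x \<longrightarrow> w \<noteq> u \<and> (x = u \<or> cb r w x u))"
proof -
  assume w: "w \<in> set r"
  have we: "w \<noteq> e" using w en by auto
  show ?thesis
  proof
    assume a: "act s w"
    show "act r w \<and> (\<forall>x\<in>set r. w < x \<longrightarrow> w \<noteq> u \<and> (x = u \<or> cb r w x u))"
    proof (intro conjI ballI impI)
      show "act r w" unfolding act_def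
      proof (intro ballI impI)
        fix x y assume "x \<in> set r" "y \<in> set r" "w < x" "x < y"
        then show "cb r w x y" using a ss en cb_ins_old[OF we, of x y r u] unfolding act_def by auto
      qed
      fix x assume x: "x \<in> set r" "w < x"
      then have "cb s w x e" using a ss lt unfolding act_def by auto
      then show "w \<noteq> u" "x = u \<or> cb r w x u" using cb_ins_e[OF dr en ur w x(1)] x by auto
    qed
  next
    assume a: "act r w \<and> (\<forall>x\<in>set r. w < x \<longrightarrow> w \<noteq> u \<and> (x = u \<or> cb r w x u))"
    show "act s w" unfolding act_def
    proof (intro ballI impI)
      fix x y assume xy: "x \<in> set s" "y \<in> set s" "w < x" "x < y"
      have "x \<noteq> e" using xy ss lt by auto
      then have xr: "x \<in> set r" using xy ss by auto
      show "cb s w x y"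
      proof (cases "y = e")
        case True
        then show ?thesis using cb_ins_e[OF dr en ur w xr] a xr xy by auto
      next
        case False
        then have "y \<in> set r" using xy ss by auto
        then show ?thesis using cb_ins_old[OF we \<open>x \<noteq> e\<close> False en] a xr xy unfolding act_def by auto
      qed
    qed
  qed
qed

lemma act_ins2:
  assumes au: "act r u" and w: "w \<in> set r" and m: "m \<in> set r" "\<forall>x\<in>set r. x \<le> m"
  shows "act s w \<longleftrightarrow> act r w \<and> (u = m \<or> u < w)"
proof (cases "u = m")
  case True
  have "act r w \<Longrightarrow> \<forall>x\<in>set r. w < x \<longrightarrow> w \<noteq> u \<and> (x = u \<or> cb r w x u)"
  proof (intro ballI impI)
    fix x assume "act r w" "x \<in> set r" "w < x"
    then have "w \<noteq> m" using m by fastforce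
    moreover have "x \<noteq> m \<Longrightarrow> cb r w x m" using \<open>act r w\<close> \<open>x \<in> set r\<close> \<open>w < x\<close> m unfolding act_def
      by (simp add: le_neq_implies_less)
    ultimately show "w \<noteq> u \<and> (x = u \<or> cb r w x u)" using True by auto
  qed
  then show ?thesis using act_ins[OF w] True by auto
next
  case False
  then have um: "u < m" using m ur by (simp add: le_neq_implies_less)
  show ?thesis
  proof
    assume "act s w"
    then have aw: "act r w" and c: "\<forall>x\<in>set r. w < x \<longrightarrow> w \<noteq> u \<and> (x = u \<or> cb r w x u)"
      using act_ins[OF w] by auto
    have "u < w"
    proof (rule ccontr)
      assume "\<not> u < w"
      then have "w \<le> u" by simp
      then have wm: "w < m" using um by simp
      then have "w \<noteq> u \<and> (m = u \<or> cb r w m u)" using c m by auto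
      then have "w < u" "cb r w m u" using False \<open>w \<le> u\<close> by auto
      moreover have "cb r w u m" using aw \<open>w < u\<close> um ur m unfolding act_def by auto
      ultimately show False using cb_asym[OF dr] by blast
    qed
    then show "act r w \<and> (u = m \<or> u < w)" using aw by simp
  next
    assume "act r w \<and> (u = m \<or> u < w)"
    then have aw: "act r w" and uw: "u < w" using False by auto
    have "\<forall>x\<in>set r. w < x \<longrightarrow> w \<noteq> u \<and> (x = u \<or> cb r w x u)"
    proof (intro ballI impI)
      fix x assume "x \<in> set r" "w < x"
      then have uwx: "cb r u w x" using au w uw unfolding act_def by auto
      show "w \<noteq> u \<and> (x = u \<or> cb r w x u)" using uw cb_cycle[OF uwx] by auto
    qed
    then show "act s w" using act_ins[OF w] aw by auto
  qed
qed

end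



lemma cb_nth: "distinct ys \<Longrightarrow> i < length ys \<Longrightarrow> j < length ys \<Longrightarrow> k < length ys \<Longrightarrow>
  cb ys (ys!i) (ys!j) (ys!k) \<longleftrightarrow> (i < j \<and> j < k) \<or> (j < k \<and> k < i) \<or> (k < i \<and> i < j)"
  unfolding cb_def by (simp add: ord_nth)

lemma av_rotate: "distinct xs \<Longrightarrow> av (rotate k xs) = av xs"
  unfolding av_def cadj_def by (simp add: cb_rotate)

lemma contains_imp: assumes d: "distinct ys" and c: "contains_1432 ys" shows "\<not> av ys"
proof -
  obtain i j k where h: "i + 1 < j" "j < k" "k < length ys" "ys ! i < ys ! k" "ys ! k < ys ! j" "ys ! j < ys ! (i + 1)"
    using c unfolding contains_1432_def by blast
  have "cadj ys (ys!i) (ys!(i+1))" unfolding cadj_def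
  proof (intro conjI ballI)
    show "ys!i \<in> set ys" "ys!(i+1) \<in> set ys" using h by auto
    show "ys!i \<noteq> ys!(i+1)" using h by auto
    fix z assume "z \<in> set ys"
    then obtain l where l: "l < length ys" "z = ys!l" by (auto simp: in_set_conv_nth)
    show "\<not> cb ys (ys ! i) z (ys ! (i + 1))" using cb_nth[OF d, of i l "i+1"] l h by auto
  qed
  moreover have "cb ys (ys!i) (ys!j) (ys!k)" using cb_nth[OF d, of i j k] h by auto
  ultimately show ?thesis unfolding av_def using h by force
qed

lemma notav_imp: assumes d: "distinct xs" and n: "\<not> av xs" shows "\<exists>r\<in>cyc xs. contains_1432 r"
proof -
  obtain a b c d' where h: "cadj xs a b" "a < b" "cb xs a c d'" "a < d'" "d' < c" "c < b"
    using n unfolding av_def by blast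
  have "a \<in> set xs" using h unfolding cadj_def by auto
  then obtain i where i: "i < length xs" "xs ! i = a" by (auto simp: in_set_conv_nth)
  define r where "r = rotate i xs"
  have rc: "r \<in> cyc xs" unfolding r_def cyc_def using i by blast
  have dr: "distinct r" using d r_def by simp
  have lr: "length r = length xs" using r_def by simp
  have r0: "r ! 0 = a" unfolding r_def using i nth_rotate[of 0 xs i] by (cases xs) auto
  have ca: "cadj r a b" using h(1) d unfolding r_def cadj_def by (simp add: cb_rotate)
  have cc: "cb r a c d'" using h(3) d unfolding r_def by (simp add: cb_rotate)
  have "b \<in> set r" using ca unfolding cadj_def by auto
  then obtain ib where ib: "ib < length r" "r ! ib = b" by (auto simp: in_set_conv_nth)
  have "c \<in> set r" "d' \<in> set r" using cb_set[OF cc] by auto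
  then obtain ic id where ic: "ic < length r" "r ! ic = c" and id: "id < length r" "r ! id = d'"
    by (auto simp: in_set_conv_nth)
  have l0: "0 < length r" using ib by auto
  have "0 < ic \<and> ic < id" using cc cb_nth[OF dr l0 ic(1) id(1)] r0 ic id by auto
  have "ib \<noteq> 0"
  proof
    assume "ib = 0"
    then have "b = a" using ib(2) r0 by simp
    then show False using h(2) by simp
  qed
  have "ib = 1"
  proof (rule ccontr)
    assume "ib \<noteq> 1"
    then have "1 < ib" using \<open>ib \<noteq> 0\<close> by auto
    then have "cb r (r!0) (r!1) (r!ib)" using cb_nth[OF dr l0 _ ib(1), of 1] ib by auto
    moreover have "r!1 \<in> set r" using \<open>1 < ib\<close> ib by auto
    ultimately show False using ca r0 ib unfolding cadj_def by auto
  qed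
  have "ic \<noteq> 1" using \<open>ib = 1\<close> ib ic h by auto
  then have "contains_1432 r" unfolding contains_1432_def
    using \<open>0 < ic \<and> ic < id\<close> r0 ib ic id h \<open>ib = 1\<close>
    by (intro exI[of _ 0] exI[of _ ic] exI[of _ id]) auto
  then show ?thesis using rc by blast
qed

lemma cyc_bridge: "distinct xs \<Longrightarrow> cyc_contains_1432 (cyc xs) \<longleftrightarrow> \<not> av xs"
proof
  assume d: "distinct xs" and "cyc_contains_1432 (cyc xs)"
  then obtain r where "r \<in> cyc xs" "contains_1432 r" unfolding cyc_contains_1432_def by blast
  then obtain k where "r = rotate k xs" unfolding cyc_def by blast
  then show "\<not> av xs" using contains_imp \<open>contains_1432 r\<close> av_rotate d by (metis distinct_rotate)
next
  assume "distinct xs" "\<not> av xs"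
  then show "cyc_contains_1432 (cyc xs)" unfolding cyc_contains_1432_def using notav_imp by blast
qed

lemma cyc_range: "xs \<noteq> [] \<Longrightarrow> cyc xs = range (\<lambda>k. rotate k xs)"
  unfolding cyc_def
proof (intro set_eqI iffI)
  fix ys assume "xs \<noteq> []" "ys \<in> range (\<lambda>k. rotate k xs)"
  then obtain k where "ys = rotate k xs" by auto
  then have "ys = rotate (k mod length xs) xs" "k mod length xs < length xs"
    using rotate_conv_mod \<open>xs \<noteq> []\<close> by auto
  then show "ys \<in> {rotate k xs |k. k < length xs}" by blast
qed auto

lemma cyc_rotate: assumes ne: "xs \<noteq> []" shows "cyc (rotate i xs) = cyc xs"
proof -
  define i' where "i' = i mod length xs"
  have ri: "rotate i xs = rotate i' xs" unfolding i'_def by (rule rotate_conv_mod)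
  have i'l: "i' < length xs" using ne i'_def by simp
  have bk: "rotate (length xs - i') (rotate i xs) = xs"
    using ri i'l by (simp add: rotate_rotate)
  have ne2: "rotate i xs \<noteq> []" using ne by simp
  show ?thesis unfolding cyc_range[OF ne] cyc_range[OF ne2]
  proof (intro set_eqI iffI)
    fix ys assume "ys \<in> range (\<lambda>k. rotate k (rotate i xs))"
    then show "ys \<in> range (\<lambda>k. rotate k xs)" by (auto simp: rotate_rotate)
  next
    fix ys assume "ys \<in> range (\<lambda>k. rotate k xs)"
    then obtain k where "ys = rotate k xs" by auto
    then have "ys = rotate (k + (length xs - i')) (rotate i xs)"
      using bk by (metis rotate_rotate)
    then show "ys \<in> range (\<lambda>k. rotate k (rotate i xs))" by blast
  qed
qed

definition D :: "nat \<Rightarrow> nat list set" where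
  "D m = {xs \<in> perms m. hd xs = 1}"

lemma finite_perms: "finite (perms n)"
proof -
  have "perms n \<subseteq> {xs. set xs \<subseteq> {1..n} \<and> length xs \<le> n}"
    unfolding perms_def using distinct_card by fastforce
  then show ?thesis using finite_lists_length_le[of "{1..n}" n] finite_subset by blast
qed

lemma finite_D: "finite (D n)" unfolding D_def using finite_perms by simp

lemma perms_ne: "1 \<le> n \<Longrightarrow> xs \<in> perms n \<Longrightarrow> xs \<noteq> []"
  unfolding perms_def by auto

lemma inj_cyc: "1 \<le> n \<Longrightarrow> inj_on cyc (D n)"
proof (rule inj_onI)
  fix xs ys assume n: "1 \<le> n" and x: "xs \<in> D n" and y: "ys \<in> D n" and e: "cyc xs = cyc ys"
  have nx: "xs \<noteq> []" and ny: "ys \<noteq> []" using x y n perms_ne unfolding D_def by auto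
  have "ys \<in> cyc ys" unfolding cyc_def using ny by (auto intro: exI[of _ 0])
  then obtain k where k: "k < length xs" "ys = rotate k xs" using e unfolding cyc_def by auto
  have "hd ys = xs ! k" using k nx by (simp add: hd_rotate_conv_nth)
  moreover have "hd xs = xs ! 0" using nx by (simp add: hd_conv_nth)
  ultimately have "xs ! k = xs ! 0" using x y unfolding D_def by auto
  moreover have "distinct xs" using x unfolding D_def perms_def by auto
  ultimately have "k = 0" using k nx by (simp add: nth_eq_iff_index_eq)
  then show "xs = ys" using k by simp
qed

lemma Av_eq: assumes n: "1 \<le> n" shows "Av_1432 n = cyc ` {xs \<in> D n. av xs}"
proof (intro set_eqI iffI)
  fix C assume "C \<in> Av_1432 n"
  then obtain xs where xs: "xs \<in> perms n" "C = cyc xs" "\<not> cyc_contains_1432 C"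
    unfolding Av_1432_def cyc_perms_def by auto
  have ne: "xs \<noteq> []" using perms_ne n xs by auto
  have "1 \<in> set xs" using xs n unfolding perms_def by auto
  then obtain i where i: "i < length xs" "xs ! i = 1" by (auto simp: in_set_conv_nth)
  define ys where "ys = rotate i xs"
  have "ys \<in> perms n" using xs unfolding ys_def perms_def by simp
  moreover have "hd ys = 1" unfolding ys_def using i ne by (simp add: hd_rotate_conv_nth)
  moreover have "cyc ys = C" unfolding ys_def using cyc_rotate ne xs by simp
  moreover have "distinct ys" using \<open>ys \<in> perms n\<close> unfolding perms_def by simp
  ultimately show "C \<in> cyc ` {xs \<in> D n. av xs}" unfolding D_def using cyc_bridge xs(3) by blast
next
  fix C assume "C \<in> cyc ` {xs \<in> D n. av xs}"
  then obtain xs where "xs \<in> D n" "av xs" "C = cyc xs" by auto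
  then show "C \<in> Av_1432 n" unfolding Av_1432_def cyc_perms_def D_def perms_def using cyc_bridge by auto
qed

lemma card_Av: "1 \<le> n \<Longrightarrow> card (Av_1432 n) = card {xs \<in> D n. av xs}"
  using Av_eq card_image inj_cyc by (metis (no_types, lifting) inj_on_subset mem_Collect_eq subsetI)



lemma D_props: "xs \<in> D m \<Longrightarrow> distinct xs \<and> set xs = {1..m} \<and> hd xs = 1"
  unfolding D_def perms_def by auto

lemma D_del: assumes m: "1 \<le> m" and s: "s \<in> D (Suc m)" shows "removeAll (Suc m) s \<in> D m"
proof -
  have p: "distinct s" "set s = {1..Suc m}" "hd s = 1" using D_props[OF s] by auto
  then have "s \<noteq> []" by auto
  then obtain t where t: "s = 1 # t" using p(3) by (cases s) auto
  have "removeAll (Suc m) s = 1 # removeAll (Suc m) t" using t m by simp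
  moreover have "set (removeAll (Suc m) s) = {1..m}" using p(2) by auto
  moreover have "distinct (removeAll (Suc m) s)" using p(1) by (simp add: distinct_removeAll)
  ultimately show ?thesis unfolding D_def perms_def by simp
qed

lemma D_ins: assumes m: "1 \<le> m" and r: "r \<in> D m" and u: "u \<in> set r" shows "ins r u (Suc m) \<in> D (Suc m)"
proof -
  have p: "distinct r" "set r = {1..m}" "hd r = 1" using D_props[OF r] by auto
  have "r \<noteq> []" using u by auto
  moreover have "Suc m \<notin> set r" using p by auto
  moreover have "hd (ins r u (Suc m)) = 1" using hd_ins[OF \<open>r \<noteq> []\<close>] p by simp
  ultimately show ?thesis unfolding D_def perms_def
    using distinct_ins[OF p(1) _ u] set_ins[OF u] p by auto
qed

lemma decomp: assumes d: "distinct s" and e: "e \<in> set s" and h: "hd s \<noteq> e"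
  shows "\<exists>u\<in>set (removeAll e s). s = ins (removeAll e s) u e"
proof -
  obtain p q where pq: "s = p @ e # q" using e split_list by metis
  have "p \<noteq> []" using h pq by auto
  then obtain p' u where pu: "p = p' @ [u]" using rev_exhaust by blast
  have s2: "s = p' @ u # e # q" using pq pu by simp
  have nd: "e \<notin> set p'" "e \<notin> set q" "u \<noteq> e" "u \<notin> set p'" using d s2 by auto
  have ra: "removeAll e s = p' @ u # q" using s2 nd by simp
  have "ins (removeAll e s) u e = s" unfolding ra using nd s2 by (simp add: ins_append)
  then show ?thesis using ra by auto
qed

lemma act_top: "xs \<in> D M \<Longrightarrow> M \<le> Suc v \<Longrightarrow> act xs v"
  unfolding act_def using D_props by fastforce

lemma ctx: "1 \<le> m \<Longrightarrow> r \<in> D m \<Longrightarrow> u \<in> set r \<Longrightarrow> insctx r u (Suc m)"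
  unfolding insctx_def using D_props by fastforce

definition Acnt :: "nat \<Rightarrow> nat \<Rightarrow> nat" where
  "Acnt m v = card {xs \<in> D m. av xs \<and> act xs v}"

lemma card_S1:
  assumes m: "1 \<le> m" and v: "1 \<le> v" "v \<le> m"
  shows "card {s \<in> D (Suc m). av s \<and> act s v \<and> (v = 1 \<or> \<not> act s (v - 1))} = Acnt m v"
proof -
  let ?S1 = "{s \<in> D (Suc m). av s \<and> act s v \<and> (v = 1 \<or> \<not> act s (v - 1))}"
  let ?S2 = "{r \<in> D m. av r \<and> act r v}"
  define U where "U r = (if v = 1 \<or> \<not> act r (v - 1) then m else v - 1)" for r
  define g where "g r = ins r (U r) (Suc m)" for r
  have Uin: "U r \<in> set r" if "r \<in> D m" for r
    using D_props[OF that] v m unfolding U_def by auto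
  have Uact: "act r (U r)" if "r \<in> D m" for r
    using that act_top[OF that, of m] unfolding U_def by auto
  have mset: "m \<in> set r" "\<forall>x\<in>set r. x \<le> m" if "r \<in> D m" for r
    using D_props[OF that] m by auto
  have vset: "v \<in> set r" if "r \<in> D m" for r using D_props[OF that] v by auto
  have v1set: "v - 1 \<in> set r" if "r \<in> D m" "v \<noteq> 1" for r using D_props[OF that(1)] v that(2) by auto
  have "bij_betw (removeAll (Suc m)) ?S1 ?S2"
  proof (rule bij_betw_byWitness[where f' = g])
    show "\<forall>s\<in>?S1. g (removeAll (Suc m) s) = s"
    proof
      fix s assume s: "s \<in> ?S1"
      define r where "r = removeAll (Suc m) s"
      have rD: "r \<in> D m" unfolding r_def using D_del m s by auto
      have sp: "distinct s" "set s = {1..Suc m}" "hd s = 1" using D_props s by auto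
      have "Suc m \<in> set s" "hd s \<noteq> Suc m" using sp m by auto
      then obtain u where u: "u \<in> set r" "s = ins r u (Suc m)"
        using decomp[OF sp(1)] unfolding r_def by blast
      interpret insctx r u "Suc m" using ctx[OF m rD u(1)] .
      have avs: "av (ins r u (Suc m))" using s u by auto
      then have ar: "av r" "act r u" using av_ins by auto
      have A2: "act (ins r u (Suc m)) w \<longleftrightarrow> act r w \<and> (u = m \<or> u < w)" if "w \<in> set r" for w
        using act_ins2[OF ar(2) that mset[OF rD]] .
      have "U r = u"
      proof (cases "u = m")
        case True
        show ?thesis
        proof (cases "v = 1")
          case True then show ?thesis using \<open>u = m\<close> unfolding U_def by simp
        next
          case False
          then have "\<not> act s (v - 1)" using s by auto
          then have "\<not> act r (v - 1)" using A2[OF v1set[OF rD False]] u(2) \<open>u = m\<close> by auto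
          then show ?thesis using \<open>u = m\<close> unfolding U_def by simp
        qed
      next
        case False
        have "act s v" using s by auto
        then have uv: "u < v" using A2[OF vset[OF rD]] u(2) False by auto
        have "u \<ge> 1" using u(1) D_props[OF rD] by auto
        then have v1: "v \<noteq> 1" using uv by auto
        then have na: "\<not> act s (v - 1)" using s by auto
        have "u = v - 1"
        proof (rule ccontr)
          assume "u \<noteq> v - 1"
          then have "u < v - 1" using uv by auto
          then have "act r (v - 1)" using act_up[OF _ ar(2)] D_props[OF rD] v1set[OF rD v1] by auto
          then have "act s (v - 1)" using A2[OF v1set[OF rD v1]] u(2) \<open>u < v - 1\<close> by auto
          then show False using na by simp
        qed
        then show ?thesis using ar(2) v1 unfolding U_def by simp
      qed
      then show "g (removeAll (Suc m) s) = s" unfolding g_def r_def[symmetric] using u(2) by simp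
    qed
    show "\<forall>r\<in>?S2. removeAll (Suc m) (g r) = r"
    proof
      fix r assume "r \<in> ?S2"
      then have "set r = {1..m}" using D_props by blast
      then have "Suc m \<notin> set r" by auto
      then show "removeAll (Suc m) (g r) = r" unfolding g_def by (rule removeAll_ins)
    qed
    show "removeAll (Suc m) ` ?S1 \<subseteq> ?S2"
    proof
      fix r0 assume "r0 \<in> removeAll (Suc m) ` ?S1"
      then obtain s where s: "s \<in> ?S1" and r0: "r0 = removeAll (Suc m) s" by auto
      define r where "r = removeAll (Suc m) s"
      have rD: "r \<in> D m" unfolding r_def using D_del m s by auto
      have sp: "distinct s" "set s = {1..Suc m}" "hd s = 1" using D_props s by auto
      have "Suc m \<in> set s" "hd s \<noteq> Suc m" using sp m by auto
      then obtain u where u: "u \<in> set r" "s = ins r u (Suc m)"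
        using decomp[OF sp(1)] unfolding r_def by blast
      interpret insctx r u "Suc m" using ctx[OF m rD u(1)] .
      have avs: "av (ins r u (Suc m))" using s u by auto
      then have ar: "av r" "act r u" using av_ins by auto
      have "act r v" using act_ins2[OF ar(2) vset[OF rD] mset[OF rD]] s u(2) by auto
      then show "r0 \<in> ?S2" using rD ar r0 r_def by auto
    qed
    show "g ` ?S2 \<subseteq> ?S1"
    proof
      fix s0 assume "s0 \<in> g ` ?S2"
      then obtain r where r: "r \<in> ?S2" and s0: "s0 = g r" by auto
      have rD: "r \<in> D m" using r by auto
      interpret insctx r "U r" "Suc m" using ctx[OF m rD Uin[OF rD]] .
      have avs: "av (g r)" unfolding g_def using av_ins r Uact[OF rD] by auto
      have A2: "act (g r) w \<longleftrightarrow> act r w \<and> (U r = m \<or> U r < w)" if "w \<in> set r" for w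
        unfolding g_def using act_ins2[OF Uact[OF rD] that mset[OF rD]] .
      have "U r = m \<or> U r < v" unfolding U_def using v by auto
      then have av1: "act (g r) v" using A2[OF vset[OF rD]] r by auto
      have av2: "v = 1 \<or> \<not> act (g r) (v - 1)"
      proof (cases "v = 1")
        case False
        show ?thesis
        proof (cases "act r (v - 1)")
          case True
          then have "U r = v - 1" unfolding U_def using False by simp
          then have "\<not> (U r = m \<or> U r < v - 1)" using v by auto
          then show ?thesis using A2[OF v1set[OF rD False]] by auto
        next
          case False
          then show ?thesis using A2[OF v1set[OF rD \<open>v \<noteq> 1\<close>]] by auto
        qed
      qed simp
      have "g r \<in> D (Suc m)" unfolding g_def using D_ins[OF m rD Uin[OF rD]] .
      then show "s0 \<in> ?S1" using s0 avs av1 av2 by auto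
    qed
  qed
  then show ?thesis unfolding Acnt_def by (rule bij_betw_same_card)
qed

lemma R1: "1 \<le> m \<Longrightarrow> Acnt (Suc m) 1 = Acnt m 1"
  using card_S1[of m 1] unfolding Acnt_def by simp

lemma R2: assumes m: "1 \<le> m" and v: "2 \<le> v" "v \<le> m"
  shows "Acnt (Suc m) v = Acnt (Suc m) (v - 1) + Acnt m v"
proof -
  let ?S1 = "{s \<in> D (Suc m). av s \<and> act s v \<and> (v = 1 \<or> \<not> act s (v - 1))}"
  let ?T = "{s \<in> D (Suc m). av s \<and> act s (v - 1)}"
  have up: "act s v" if "s \<in> D (Suc m)" "act s (v - 1)" for s
    using act_up[OF _ that(2), of v] D_props[OF that(1)] v by auto
  have "{s \<in> D (Suc m). av s \<and> act s v} = ?T \<union> ?S1" using up by auto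
  moreover have "?T \<inter> ?S1 = {}" using v by auto
  moreover have "finite ?T" "finite ?S1" using finite_D by auto
  ultimately have "card {s \<in> D (Suc m). av s \<and> act s v} = card ?T + card ?S1"
    by (simp add: card_Un_disjoint)
  then show ?thesis using card_S1[of m v] m v unfolding Acnt_def by simp
qed

lemma R3: "Acnt (Suc m) (Suc m) = Acnt (Suc m) m"
proof -
  have "{xs \<in> D (Suc m). av xs \<and> act xs (Suc m)} = {xs \<in> D (Suc m). av xs \<and> act xs m}"
    using act_top by auto
  then show ?thesis unfolding Acnt_def by simp
qed

lemma Atot: "card {xs \<in> D n. av xs} = Acnt n n"
proof -
  have "{xs \<in> D n. av xs} = {xs \<in> D n. av xs \<and> act xs n}" using act_top by auto
  then show ?thesis unfolding Acnt_def by simp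
qed

lemma R0: "Acnt 1 1 = 1"
proof -
  have "D 1 = {[1]}"
  proof (intro set_eqI iffI)
    fix xs assume "xs \<in> D 1"
    then have "distinct xs" "set xs = {1}" using D_props by auto
    then have "length xs = 1" using distinct_card by fastforce
    then obtain x where "xs = [x]" by (cases xs) auto
    then show "xs \<in> {[1]}" using \<open>set xs = {1}\<close> by auto
  qed (auto simp: D_def perms_def)
  moreover have "av [1]" unfolding av_def cadj_def by auto
  ultimately have "{xs \<in> D 1. av xs \<and> act xs 1} = {[1]}" using act_top by auto
  then show ?thesis unfolding Acnt_def by simp
qed



lemma closed: "q \<le> p \<Longrightarrow> Acnt (Suc p) (Suc q) + (case q of 0 \<Rightarrow> 0 | Suc r \<Rightarrow> (p + q) choose r) = (p + q) choose q"
proof (induction p arbitrary: q)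
  case 0
  then show ?case using R0 by simp
next
  case (Suc p)
  note outer = Suc.IH
  have inner: "q \<le> p \<Longrightarrow> Acnt (Suc (Suc p)) (Suc q) + (case q of 0 \<Rightarrow> 0 | Suc r \<Rightarrow> (Suc p + q) choose r) = (Suc p + q) choose q" for q
  proof (induction q)
    case 0
    have "Acnt (Suc (Suc p)) 1 = Acnt (Suc p) 1" using R1[of "Suc p"] by simp
    moreover have "Acnt (Suc p) 1 = 1" using outer[of 0] by simp
    ultimately show ?case by simp
  next
    case (Suc q)
    have r2: "Acnt (Suc (Suc p)) (Suc (Suc q)) = Acnt (Suc (Suc p)) (Suc q) + Acnt (Suc p) (Suc (Suc q))"
      using R2[of "Suc p" "Suc (Suc q)"] Suc.prems by simp
    have ih1: "Acnt (Suc (Suc p)) (Suc q) + (case q of 0 \<Rightarrow> 0 | Suc r \<Rightarrow> (Suc p + q) choose r) = (Suc p + q) choose q"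
      using Suc.IH Suc.prems by simp
    have ih2: "Acnt (Suc p) (Suc (Suc q)) + (p + Suc q choose q) = (p + Suc q) choose Suc q"
      using outer[of "Suc q"] Suc.prems by simp
    have pas1: "(Suc p + Suc q) choose Suc q = (Suc p + q choose q) + (Suc p + q choose Suc q)"
      by simp
    have pas2: "(Suc p + Suc q) choose q = (case q of 0 \<Rightarrow> 0 | Suc r \<Rightarrow> (Suc p + q) choose r) + (Suc p + q choose q)"
      by (cases q) simp_all
    have e1: "p + Suc q = Suc p + q" by simp
    show ?case using r2 ih1 ih2 pas1 pas2 unfolding e1 by (cases q) simp_all
  qed
  show ?case
  proof (cases "q \<le> p")
    case True
    then show ?thesis using inner[OF True] by simp
  next
    case False
    then have q: "q = Suc p" using Suc.prems by simp
    have r3: "Acnt (Suc (Suc p)) (Suc (Suc p)) = Acnt (Suc (Suc p)) (Suc p)" using R3 by simp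
    have ip: "Acnt (Suc (Suc p)) (Suc p) + (case p of 0 \<Rightarrow> 0 | Suc r \<Rightarrow> (Suc p + p) choose r) = (Suc p + p) choose p"
      using inner[of p] by simp
    have pas1: "(Suc p + Suc p) choose Suc p = (Suc p + p choose p) + (Suc p + p choose Suc p)" by simp
    have pas2: "(Suc p + Suc p) choose p = (case p of 0 \<Rightarrow> 0 | Suc r \<Rightarrow> (Suc p + p) choose r) + (Suc p + p choose p)"
      by (cases p) simp_all
    have sym: "(Suc p + p) choose Suc p = (Suc p + p) choose p"
      using binomial_symmetric[of "Suc p" "Suc p + p"] by simp
    show ?thesis unfolding q using r3 ip pas1 pas2 sym by (cases p) simp_all
  qed
qed

lemma cat_id: "Suc (Suc r) * ((2 * Suc r) choose r) = Suc r * ((2 * Suc r) choose Suc r)"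
proof -
  have a: "Suc r * ((2 * Suc r) choose Suc r) = (2 * Suc r) * ((2 * Suc r - 1) choose r)"
    by (rule binomial_absorption)
  have b: "(2 * Suc r - r) * ((2 * Suc r) choose r) = (2 * Suc r) * ((2 * Suc r - 1) choose r)"
    by (rule binomial_absorb_comp)
  have c: "2 * Suc r - r = Suc (Suc r)" by simp
  show ?thesis using a b unfolding c by simp
qed

theorem theorem5p10:
  fixes n :: nat
  assumes "n \<ge> 1"
  shows "real (card (Av_1432 n)) = catalan (n - 1)"
proof -
  obtain p where p: "n = Suc p" using assms by (cases n) auto
  have "card (Av_1432 n) = Acnt (Suc p) (Suc p)" using card_Av[OF assms] Atot p by simp
  moreover have cl: "Acnt (Suc p) (Suc p) + (case p of 0 \<Rightarrow> 0 | Suc r \<Rightarrow> (p + p) choose r) = (p + p) choose p"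
    using closed[of p p] by simp
  moreover have "Suc p * Acnt (Suc p) (Suc p) = (2 * p) choose p"
  proof (cases p)
    case 0
    then show ?thesis using cl by simp
  next
    case (Suc r)
    have "Suc p * (Acnt (Suc p) (Suc p) + ((2 * p) choose r)) = Suc p * ((2 * p) choose p)"
      using cl Suc by (simp add: mult_2)
    then have "Suc p * Acnt (Suc p) (Suc p) + p * ((2 * p) choose p) = Suc p * ((2 * p) choose p)"
      using cat_id[of r] Suc by (simp add: algebra_simps)
    then show ?thesis by simp
  qed
  ultimately have "real (Suc p) * real (card (Av_1432 n)) = real ((2 * p) choose p)"
    by (metis of_nat_mult)
  then show ?thesis unfolding catalan_def p by (simp add: field_simps)
qed


end
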